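(* Define $\tau:\mathrm{Cu}_2\setminus\{\lozenge\}\to\mathbb C$ by $\tau(w)=1$ if $w=s_{\mathbf i1}s_{\mathbf i}^*$ for some $\mathbf i\in\mathbf I$, and $\tau(w)=0$ otherwise, and regard it as the bounded linear functional $f\mapsto\sum_{w}f(w)\tau(w)$ on $\mathcal A$. Then $\tau$ is a non-zero bounded trace on $\mathcal A$ with $\tau(\delta_e)=0$; consequently $\tau$ vanishes on $\mathcal J$ and induces a non-zero bounded trace on $\mathcal A/\mathcal J$.
   Context: Let $\mathrm{Cu}_2$ be the involutive monoid with identity $e$ and zero element $\lozenge$ (so $\lozenge t=\lozenge=t\lozenge$ for all $t$), generated by $s_1,s_2,s_1^*,s_2^*$ subject to $s_1^*s_1=e=s_2^*s_2$ and $s_1^*s_2=\lozenge=s_2^*s_1$, with involution $t\mapsto t^*$ satisfying $(t^* )^*=t$, $(tu)^*=u^*t^*$. Let $\mathbf I_0=\{\emptyset\}$, $\mathbf I_n=\{1,2\}^n$, $\mathbf I=\bigcup_{n\ge0}\mathbf I_n$ (finite words; $\mathbf i1$ denotes the word $\mathbf i$ followed by the letter $1$). For $\mathbf i=(i_1,\dots,i_k)\in\mathbf I$ put $s_{\mathbf i}=s_{i_1}\cdots s_{i_k}$ ($s_\emptyset=e$) and $s_{\mathbf i}^*=(s_{\mathbf i})^*$. Let $\mathcal A=\ell^1(\mathrm{Cu}_2\setminus\{\lozenge\})$ with product $\#$ determined by bilinearity and continuity from $\delta_s\#\delta_t=\delta_{st}$ if $st\neq\lozenge$ and $\delta_s\#\delta_t=0$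 if $st=\lozenge$; this is a unital Banach algebra with unit $\delta_e$. Let $f_0=\delta_e-\delta_{s_1s_1^*}-\delta_{s_2s_2^*}$ and let $\mathcal J$ be the closed two-sided ideal of $\mathcal A$ generated by $f_0$. A trace on a Banach algebra $\mathcal B$ is a linear functional $\tau$ with $\tau(ab)=\tau(ba)$ for all $a,b\in\mathcal B$. *)

theory Defs
  imports "HOL-Analysis.Analysis" "HOL-Library.Sublist" "HOL-Library.Function_Algebras"
begin

datatype gen = G1 | G2

type_synonym word = "gen list"

text \<open>Every non-zero element of Cu_2 is uniquely of the form s_a s_b^* with a, b words.
  We model Cu_2 minus the zero element by pairs (a,b) standing for s_a s_b^*,
  and the monoid product by an option-valued map, None representing the zero element.\<close>

type_synonym cu = "word \<times> word"

definition cu_mult :: "cu \<Rightarrow> cu \<Rightarrow> cu option" where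
  "cu_mult x y = (case x of (a,b) \<Rightarrow> case y of (c,d) \<Rightarrow>
     if prefix b c then Some (a @ drop (length b) c, d)
     else if prefix c b then Some (a, d @ drop (length c) b)
     else None)"

definition cu_e :: cu where "cu_e = ([], [])"

definition cu_s :: "gen \<Rightarrow> cu" where "cu_s i = ([i], [])"

definition cu_star :: "cu \<Rightarrow> cu" where "cu_star x = (snd x, fst x)"

definition l1 :: "(cu \<Rightarrow> complex) set" where
  "l1 = {f. (\<lambda>w. norm (f w)) summable_on UNIV}"

definition l1norm :: "(cu \<Rightarrow> complex) \<Rightarrow> real" where
  "l1norm f = (\<Sum>\<^sub>\<infinity>w. norm (f w))"

definition conv :: "(cu \<Rightarrow> complex) \<Rightarrow> (cu \<Rightarrow> complex) \<Rightarrow> (cu \<Rightarrow> complex)" (infixl "#" 70) where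
  "(f # g) w = (\<Sum>\<^sub>\<infinity>(u,v)\<in>{(u,v). cu_mult u v = Some w}. f u * g v)"

definition delta :: "cu \<Rightarrow> cu \<Rightarrow> complex" where
  "delta s = (\<lambda>w. if w = s then 1 else 0)"

definition f0 :: "cu \<Rightarrow> complex" where
  "f0 = delta cu_e - delta ([G1],[G1]) - delta ([G2],[G2])"

definition closed_ideal :: "(cu \<Rightarrow> complex) set \<Rightarrow> bool" where
  "closed_ideal S \<longleftrightarrow> S \<subseteq> l1 \<and> 0 \<in> S
     \<and> (\<forall>x\<in>S. \<forall>y\<in>S. x + y \<in> S)
     \<and> (\<forall>c::complex. \<forall>x\<in>S. (\<lambda>w. c * x w) \<in> S)
     \<and> (\<forall>a\<in>l1. \<forall>x\<in>S. a # x \<in> S \<and> x # a \<in> S)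
     \<and> (\<forall>F f. (\<forall>n. F n \<in> S) \<and> f \<in> l1 \<and> (\<lambda>n. l1norm (F n - f)) \<longlonglongrightarrow> 0 \<longrightarrow> f \<in> S)"

definition J :: "(cu \<Rightarrow> complex) set" where
  "J = \<Inter>{S. closed_ideal S \<and> f0 \<in> S}"

definition tau_w :: "cu \<Rightarrow> complex" where
  "tau_w w = (if \<exists>i. w = (i @ [G1], i) then 1 else 0)"

definition tau :: "(cu \<Rightarrow> complex) \<Rightarrow> complex" where
  "tau f = (\<Sum>\<^sub>\<infinity>w. f w * tau_w w)"

end

theory Submission
  imports Defs
begin


fun mo :: "cu option \<Rightarrow> cu option \<Rightarrow> cu option" where
  "mo (Some x) (Some y) = cu_mult x y"
| "mo _ _ = None"

fun tauo :: "cu option \<Rightarrow> complex" where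
  "tauo None = 0"
| "tauo (Some w) = tau_w w"

lemma cm1: "cu_mult (a,b) (b@z, d) = Some (a@z, d)"
  by (simp add: cu_mult_def)
lemma cm2: "cu_mult (a, c@z) (c, d) = Some (a, d@z)"
  by (auto simp add: cu_mult_def prefix_def)
lemma cm3: "\<not> prefix b c \<Longrightarrow> \<not> prefix c b \<Longrightarrow> cu_mult (a,b) (c,d) = None"
  by (simp add: cu_mult_def)

lemma cm_cases:
  obtains z where "c = b @ z" "cu_mult (a,b) (c,d) = Some (a@z, d)"
  | z where "b = c @ z" "cu_mult (a,b) (c,d) = Some (a, d@z)"
  | "\<not> prefix b c" "\<not> prefix c b" "cu_mult (a,b) (c,d) = None"
  by (metis cm1 cm2 cm3 prefix_def)

lemma incomp_app: "\<not> prefix d e \<Longrightarrow> \<not> prefix e d \<Longrightarrow> cu_mult (a, d @ u) (e, f) = None"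
proof -
  assume h: "\<not> prefix d e" "\<not> prefix e d"
  have "\<not> prefix (d@u) e" using h prefix_order.trans[of d "d@u" e] by auto
  moreover have "\<not> prefix e (d@u)" using h prefix_same_cases[of e "d@u" d] by auto
  ultimately show ?thesis by (simp add: cm3)
qed

lemma incomp_app2: "\<not> prefix b c \<Longrightarrow> \<not> prefix c b \<Longrightarrow> cu_mult (a, b) (c @ u, f) = None"
proof -
  assume h: "\<not> prefix b c" "\<not> prefix c b"
  have "\<not> prefix (c@u) b" using h prefix_order.trans[of c "c@u" b] by auto
  moreover have "\<not> prefix b (c@u)" using h prefix_same_cases[of b "c@u" c] by auto
  ultimately show ?thesis by (simp add: cm3)
qed

lemma mo_assoc3: "mo (mo (Some (a,b)) (Some (c,d))) (Some (e,f)) = mo (Some (a,b)) (mo (Some (c,d)) (Some (e,f)))"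
proof (cases rule: cm_cases[of c b a d])
    case (1 u)
    then show ?thesis
    proof (cases rule: cm_cases[of e d "a@u" f])
      case (1 w) thus ?thesis using `c = b @ u` by (simp add: cm1)
    next
      case (2 w) thus ?thesis using `c = b @ u` by (simp add: cm1 cm2)
    next
      case 3 thus ?thesis using `c = b @ u` by (simp add: cm1 cm3)
    qed
  next
    case (2 u)
    then show ?thesis
    proof (cases rule: cm_cases[of e "d@u" a f])
      case (1 w) thus ?thesis using `b = c @ u` cm1[of a "c@u" w f] cm1[of c d "u@w" f] by (simp add: cm1 cm2)
    next
      case (2 w) 
      show ?thesis
      proof (cases rule: cm_cases[of e d c f])
        case (1 v) thus ?thesis using `b = c @ u` 2 cm2[of a "c@v" w f, simplified] by (auto simp add: cm1 cm2)
      next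
        case (2 v) thus ?thesis using `b = c @ u` `d @ u = e @ w` `cu_mult (a, d @ u) (e, f) = Some (a, f @ w)` by (auto simp add: cm1 cm2)
      next
        case 3 thus ?thesis using `d @ u = e @ w` by (auto simp: append_eq_append_conv2)
      qed
    next
      case 3
      show ?thesis
      proof (cases rule: cm_cases[of e d c f])
        case (1 v) thus ?thesis using `b = c @ u` 3 2 by (auto simp add: cm1 cm2 cm3 prefix_def)
      next
        case (2 v) thus ?thesis using `b = c @ u` 3 by (auto simp: prefix_def)
      next
        case 3 thus ?thesis using `b = c @ u` by (simp add: cm1 cm2 cm3 incomp_app)
      qed
    qed
  next
    case 3 thus ?thesis
      by (cases rule: cm_cases[of e d c f]) (simp_all add: incomp_app2 cm3)
qed

lemma mo_assoc: "mo (mo x y) z = mo x (mo y z)"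
proof (cases x; cases y; cases z)
  fix p q r assume xyz: "x = Some p" "y = Some q" "z = Some r"
  thus ?thesis using mo_assoc3[of "fst p" "snd p" "fst q" "snd q" "fst r" "snd r"] by simp
qed auto

lemma tauw_eq: "tau_w w = (if \<exists>i. w = (i @ [G1], i) then 1 else 0)" by (simp add: tau_w_def)

lemma tauo_one: "tauo (mo s t) = 1 \<Longrightarrow> tauo (mo t s) = 1"
proof -
  assume h: "tauo (mo s t) = 1"
  then obtain p q where st: "s = Some p" "t = Some q" by (cases s; cases t) auto
  obtain a b where p: "p = (a,b)" by fastforce
  obtain c d where q: "q = (c,d)" by fastforce
  from h st obtain i where w: "cu_mult p q = Some (i @ [G1], i)"
    by (cases "cu_mult p q") (auto simp: tau_w_def split: if_splits)
  have "tauo (mo (Some (c,d)) (Some (a,b))) = 1"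
  proof (cases rule: cm_cases[of c b a d])
    case (1 z)
    with w p q have e: "a @ z = i @ [G1]" "d = i" by auto
    show ?thesis
    proof (cases z rule: rev_cases)
      case Nil
      with e have "cu_mult (c,d) (a,b) = Some (c @ [G1], b)" using cm1[of c d "[G1]" b] by simp
      then show ?thesis using 1 Nil by (simp add: tau_w_def)
    next
      case (snoc z' g)
      with e have "a @ z' = i" "g = G1" by auto
      with e have "cu_mult (c,d) (a,b) = Some (c, b @ z')" using cm2[of c a z' b] by simp
      then show ?thesis using 1 snoc `g = G1` by (simp add: tau_w_def)
    qed
  next
    case (2 z)
    with w p q have e: "a = i @ [G1]" "d @ z = i" by auto
    hence "a = d @ z @ [G1]" by simp
    hence "cu_mult (c,d) (a,b) = Some (c @ z @ [G1], b)" using cm1[of c d "z @ [G1]" b] by simp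
    then show ?thesis using 2 by (simp add: tau_w_def)
  next
    case 3 thus ?thesis using w p q by simp
  qed
  thus ?thesis using st p q by simp
qed

lemma tauo_01: "tauo x = 0 \<or> tauo x = 1"
  by (cases x) (auto simp: tau_w_def)

lemma tauo_comm: "tauo (mo s t) = tauo (mo t s)"
  by (metis tauo_01 tauo_one)



lemma l1_iff: "f \<in> l1 \<longleftrightarrow> (\<lambda>x. norm (f x)) summable_on UNIV" by (simp add: l1_def)

lemma l1_bounded_mult:
  fixes P :: "'a \<Rightarrow> complex"
  assumes "(\<lambda>x. norm (P x)) summable_on A" "\<And>x. norm (k x) \<le> B"
  shows "(\<lambda>x. norm (P x * k x)) summable_on A"
proof -
  have "(\<lambda>x. B * norm (P x)) summable_on A" using assms(1) by (rule summable_on_cmult_right)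
  moreover have "norm (P x * k x) \<le> B * norm (P x)" for x
  proof -
    have "norm (P x) * norm (k x) \<le> norm (P x) * B" by (rule mult_left_mono) (use assms(2) in auto)
    thus ?thesis by (simp add: norm_mult mult.commute)
  qed
  ultimately show ?thesis by (rule summable_on_comparison_test) auto
qed

lemma l1_summable_mult:
  assumes "f \<in> l1" "\<And>x. norm (k x) \<le> B"
  shows "(\<lambda>x. f x * k x) summable_on UNIV"
  using l1_bounded_mult[of f UNIV k B] assms abs_summable_summable l1_iff by blast

lemma l1_prod:
  assumes "f \<in> l1" "g \<in> l1"
  shows "(\<lambda>p. norm (f (fst p) * g (snd p))) summable_on UNIV"
proof -
  have fa: "(\<lambda>x. norm (f x)) summable_on UNIV" and ga: "(\<lambda>x. norm (g x)) summable_on UNIV" using assms l1_iff by auto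
  have "(\<lambda>p. norm (f (fst p) * g (snd p))) summable_on Sigma UNIV (\<lambda>_. UNIV)"
    proof (rule iffD2[OF Infinite_Sum.abs_summable_on_Sigma_iff[where f="\<lambda>p. f (fst p) * g (snd p)"]], intro conjI ballI)
    fix u :: cu
    show "(\<lambda>v. norm (f (fst (u, v)) * g (snd (u, v)))) summable_on UNIV"
      using summable_on_cmult_right[OF ga, of "norm (f u)"] by (simp add: norm_mult)
  next
    have eq: "\<And>u. infsum (\<lambda>v. norm (f (fst (u, v)) * g (snd (u, v)))) UNIV = norm (f u) * infsum (\<lambda>v. norm (g v)) UNIV"
      by (simp add: norm_mult infsum_cmult_right')
    have h2: "(\<lambda>u. norm (norm (f u) * infsum (\<lambda>v. norm (g v)) UNIV)) summable_on UNIV"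
      using summable_on_cmult_left[OF fa, of "infsum (\<lambda>v. norm (g v)) UNIV"]
      by (simp add: abs_mult infsum_nonneg)
    show "(\<lambda>u. norm (infsum (\<lambda>v. norm (f (fst (u, v)) * g (snd (u, v)))) UNIV)) summable_on UNIV"
      using h2 by (simp only: eq)
  qed
  thus ?thesis by simp
qed

lemma fub1:
  assumes "f \<in> l1" "g \<in> l1" "\<And>u v. norm (K u v) \<le> B"
  shows "(\<Sum>\<^sub>\<infinity>p. f (fst p) * g (snd p) * K (fst p) (snd p)) = (\<Sum>\<^sub>\<infinity>u. f u * (\<Sum>\<^sub>\<infinity>v. g v * K u v))"
proof -
  have s: "(\<lambda>p. f (fst p) * g (snd p) * K (fst p) (snd p)) summable_on Sigma UNIV (\<lambda>_. UNIV)"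
    using l1_bounded_mult[OF l1_prod[OF assms(1,2)], of "\<lambda>p. K (fst p) (snd p)" B] assms(3)
      abs_summable_summable by fastforce
  have "(\<Sum>\<^sub>\<infinity>p. f (fst p) * g (snd p) * K (fst p) (snd p)) = (\<Sum>\<^sub>\<infinity>u. \<Sum>\<^sub>\<infinity>v. f u * g v * K u v)"
    using infsum_Sigma_banach[OF s] by simp
  also have "\<dots> = (\<Sum>\<^sub>\<infinity>u. f u * (\<Sum>\<^sub>\<infinity>v. g v * K u v))"
    by (simp add: mult.assoc infsum_cmult_right')
  finally show ?thesis .
qed

lemma fub2:
  assumes "f \<in> l1" "g \<in> l1" "\<And>u v. norm (K u v) \<le> B"
  shows "(\<Sum>\<^sub>\<infinity>p. f (fst p) * g (snd p) * K (fst p) (snd p)) = (\<Sum>\<^sub>\<infinity>v. g v * (\<Sum>\<^sub>\<infinity>u. f u * K u v))"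
proof -
  have s1: "(\<lambda>p. f (fst p) * g (snd p) * K (fst p) (snd p)) summable_on UNIV"
    using l1_bounded_mult[OF l1_prod[OF assms(1,2)], of "\<lambda>p. K (fst p) (snd p)" B] assms(3)
      abs_summable_summable by fastforce
  have s: "(\<lambda>(u,v). f u * g v * K u v) summable_on UNIV \<times> UNIV"
    using s1 by (simp add: split_def)
  have "(\<Sum>\<^sub>\<infinity>p. f (fst p) * g (snd p) * K (fst p) (snd p)) = (\<Sum>\<^sub>\<infinity>u. \<Sum>\<^sub>\<infinity>v. f u * g v * K u v)"
    using infsum_Sigma_banach[of "\<lambda>p. f (fst p) * g (snd p) * K (fst p) (snd p)" UNIV "\<lambda>_. UNIV"] s1
    by simp
  also have "\<dots> = (\<Sum>\<^sub>\<infinity>v. \<Sum>\<^sub>\<infinity>u. f u * g v * K u v)"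
    using infsum_swap_banach[OF s] by simp
  also have "\<dots> = (\<Sum>\<^sub>\<infinity>v. g v * (\<Sum>\<^sub>\<infinity>u. f u * K u v))"
  proof -
    have "\<And>u v. f u * g v * K u v = g v * (f u * K u v)" by (simp add: algebra_simps)
    thus ?thesis by (simp only: infsum_cmult_right')
  qed
  finally show ?thesis .
qed

definition Mset :: "cu \<Rightarrow> (cu \<times> cu) set" where "Mset w = {(u,v). cu_mult u v = Some w}"
definition Dset :: "(cu \<times> cu) set" where "Dset = {p. cu_mult (fst p) (snd p) \<noteq> None}"
definition iota :: "cu \<times> cu \<Rightarrow> cu \<times> (cu \<times> cu)" where "iota p = (the (cu_mult (fst p) (snd p)), p)"

lemma bij_iota: "bij_betw iota Dset (Sigma UNIV Mset)"
  by (rule bij_betw_byWitness[where f'=snd]) (auto simp: iota_def Dset_def Mset_def)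

lemma conv_alt: "(f # g) w = (\<Sum>\<^sub>\<infinity>p\<in>Mset w. f (fst p) * g (snd p))"
  by (simp add: conv_def Mset_def split_def)

lemma G_summable:
  assumes "f \<in> l1" "g \<in> l1" "k None = 0" "\<And>x. norm (k x) \<le> B"
  shows "(\<lambda>x. norm (f (fst (snd x)) * g (snd (snd x)) * k (Some (fst x)))) summable_on Sigma UNIV Mset"
proof -
  have H: "(\<lambda>p. norm (f (fst p) * g (snd p) * k (cu_mult (fst p) (snd p)))) summable_on UNIV"
    using l1_bounded_mult[OF l1_prod[OF assms(1,2)], of "\<lambda>p. k (cu_mult (fst p) (snd p))" B] assms(4)
    by blast
  hence "(\<lambda>p. norm (f (fst p) * g (snd p) * k (cu_mult (fst p) (snd p)))) summable_on Dset"
    using summable_on_subset_banach by blast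
  hence "(\<lambda>p. norm (f (fst (snd (iota p))) * g (snd (snd (iota p))) * k (Some (fst (iota p))))) summable_on Dset"
    by (rule summable_on_cong[THEN iffD1, rotated]) (auto simp: iota_def Dset_def)
  thus ?thesis using summable_on_reindex_bij_betw[OF bij_iota,
      of "\<lambda>x. norm (f (fst (snd x)) * g (snd (snd x)) * k (Some (fst x)))"] by simp
qed

lemma conv_l1:
  assumes "f \<in> l1" "g \<in> l1"
  shows "f # g \<in> l1"
proof -
  let ?k = "\<lambda>x::cu option. if x = None then 0 else (1::complex)"
  have G: "(\<lambda>x. norm (f (fst (snd x)) * g (snd (snd x)) * ?k (Some (fst x)))) summable_on Sigma UNIV Mset"
    by (rule G_summable[OF assms, of ?k 1]) auto
  hence G': "(\<lambda>x. norm (f (fst (snd x)) * g (snd (snd x)))) summable_on Sigma UNIV Mset" by simp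
  have inner: "\<And>w. (\<lambda>p. norm (f (fst p) * g (snd p))) summable_on Mset w"
    and outer: "(\<lambda>w. norm (infsum (\<lambda>p. norm (f (fst p) * g (snd p))) (Mset w))) summable_on UNIV"
    using G' Infinite_Sum.abs_summable_on_Sigma_iff[where f="\<lambda>x. f (fst (snd x)) * g (snd (snd x))" and A=UNIV and B=Mset]
    by auto
  have "norm ((f # g) w) \<le> norm (infsum (\<lambda>p. norm (f (fst p) * g (snd p))) (Mset w))" for w
    unfolding conv_alt using norm_infsum_bound[OF inner[of w]] by simp
  hence "(\<lambda>w. norm ((f # g) w)) summable_on UNIV"
    using summable_on_comparison_test[OF outer] by auto
  thus ?thesis by (simp add: l1_iff)
qed

lemma conv_main:
  assumes "f \<in> l1" "g \<in> l1" "k None = 0" "\<And>x. norm (k x) \<le> B"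
  shows "(\<Sum>\<^sub>\<infinity>w. (f # g) w * k (Some w)) = (\<Sum>\<^sub>\<infinity>p. f (fst p) * g (snd p) * k (cu_mult (fst p) (snd p)))"
proof -
  let ?G = "\<lambda>x. f (fst (snd x)) * g (snd (snd x)) * k (Some (fst x))"
  have Gs: "?G summable_on Sigma UNIV Mset"
    by (rule abs_summable_summable[OF G_summable[of f g k B, OF assms]])
  have "(\<Sum>\<^sub>\<infinity>w. (f # g) w * k (Some w)) = (\<Sum>\<^sub>\<infinity>w. \<Sum>\<^sub>\<infinity>p\<in>Mset w. ?G (w,p))"
    by (simp add: conv_alt infsum_cmult_left')
  also have "\<dots> = infsum ?G (Sigma UNIV Mset)"
    by (rule infsum_Sigma_banach[OF Gs])
  also have "\<dots> = infsum (\<lambda>p. ?G (iota p)) Dset"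
    by (rule infsum_reindex_bij_betw[OF bij_iota, symmetric])
  also have "\<dots> = (\<Sum>\<^sub>\<infinity>p. f (fst p) * g (snd p) * k (cu_mult (fst p) (snd p)))"
    by (rule infsum_cong_neutral) (auto simp: iota_def Dset_def assms(3), metis assms(3) not_None_eq surj_pair)
  finally show ?thesis .
qed



lemma tauo_bound: "norm (tauo x) \<le> 1"
  using tauo_01[of x] by auto

lemma mo_None2[simp]: "mo x None = None" by (cases x) auto

lemma minus_app: "(x - y) w = x w - (y::cu \<Rightarrow> complex) w" by simp

lemma l1_add: "x \<in> l1 \<Longrightarrow> y \<in> l1 \<Longrightarrow> x + y \<in> l1"
proof -
  assume a: "x \<in> l1" "y \<in> l1"
  have "(\<lambda>w. norm (x w) + norm (y w)) summable_on UNIV"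
    using a by (intro summable_on_add) (auto simp: l1_iff)
  hence "(\<lambda>w. norm ((x + y) w)) summable_on UNIV"
    by (rule summable_on_comparison_test) (auto intro: norm_triangle_ineq)
  thus ?thesis by (simp add: l1_iff)
qed

lemma l1_diff: "x \<in> l1 \<Longrightarrow> y \<in> l1 \<Longrightarrow> x - y \<in> l1"
proof -
  assume a: "x \<in> l1" "y \<in> l1"
  have "(\<lambda>w. norm (x w) + norm (y w)) summable_on UNIV"
    using a by (intro summable_on_add) (auto simp: l1_iff)
  hence "(\<lambda>w. norm ((x - y) w)) summable_on UNIV"
    by (rule summable_on_comparison_test) (auto intro: norm_triangle_ineq4)
  thus ?thesis by (simp add: l1_iff)
qed

lemma l1_scale: "x \<in> l1 \<Longrightarrow> (\<lambda>w. c * x w) \<in> l1"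
  unfolding l1_iff norm_mult by (rule summable_on_cmult_right)

lemma l1_delta: "delta s \<in> l1"
proof -
  have "(\<lambda>w. norm (delta s w)) summable_on {s}" by simp
  hence "(\<lambda>w. norm (delta s w)) summable_on UNIV"
    by (rule summable_on_cong_neutral[THEN iffD1, rotated -1]) (auto simp: delta_def)
  thus ?thesis by (simp add: l1_iff)
qed

definition phi :: "cu option \<Rightarrow> (cu \<Rightarrow> complex) \<Rightarrow> complex" where
  "phi x f = (\<Sum>\<^sub>\<infinity>v. f v * tauo (mo x (Some v)))"

lemma phi_summable: "f \<in> l1 \<Longrightarrow> (\<lambda>v. f v * tauo (mo x (Some v))) summable_on UNIV"
  by (rule l1_summable_mult[of _ _ 1]) (auto simp: tauo_bound)

lemma phi_add: "f \<in> l1 \<Longrightarrow> g \<in> l1 \<Longrightarrow> phi x (f + g) = phi x f + phi x g"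
  unfolding phi_def by (simp add: distrib_right infsum_add phi_summable)

lemma phi_scale: "phi x (\<lambda>w. c * f w) = c * phi x f"
  unfolding phi_def by (simp add: mult.assoc infsum_cmult_right')

lemma phi_diff: "f \<in> l1 \<Longrightarrow> g \<in> l1 \<Longrightarrow> phi x (f - g) = phi x f - phi x g"
proof -
  assume a: "f \<in> l1" "g \<in> l1"
  have "f - g = f + (\<lambda>w. (-1) * g w)" by (rule ext) simp
  hence "phi x (f - g) = phi x f + phi x (\<lambda>w. (-1) * g w)"
    using a l1_scale phi_add by metis
  thus ?thesis using phi_scale[of x "-1" g] by simp
qed

lemma phi_bound: "f \<in> l1 \<Longrightarrow> norm (phi x f) \<le> l1norm f"
proof -
  assume f: "f \<in> l1"
  have a: "(\<lambda>v. norm (f v * tauo (mo x (Some v)))) summable_on UNIV"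
    using l1_bounded_mult[of f UNIV "\<lambda>v. tauo (mo x (Some v))" 1] f by (simp add: l1_iff tauo_bound)
  have "norm (phi x f) \<le> (\<Sum>\<^sub>\<infinity>v. norm (f v * tauo (mo x (Some v))))"
    unfolding phi_def by (rule norm_infsum_bound[OF a])
  also have "\<dots> \<le> (\<Sum>\<^sub>\<infinity>v. norm (f v))"
    using a f by (intro infsum_mono) (auto simp: l1_iff norm_mult mult_left_le tauo_bound)
  finally show ?thesis by (simp add: l1norm_def)
qed

lemma phi_delta: "phi x (delta s) = tauo (mo x (Some s))"
proof -
  have "phi x (delta s) = (\<Sum>\<^sub>\<infinity>v\<in>{s}. delta s v * tauo (mo x (Some v)))"
    unfolding phi_def by (rule infsum_cong_neutral) (auto simp: delta_def)
  thus ?thesis by (simp add: delta_def)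
qed

lemma cu_e_left: "cu_mult cu_e v = Some v"
  by (cases v) (simp add: cu_mult_def cu_e_def)

lemma tau_phi: "tau f = phi (Some cu_e) f"
  by (simp add: tau_def phi_def cu_e_left)

lemma f0_comb: "tauo (mo x (Some cu_e)) - tauo (mo x (Some ([G1],[G1]))) - tauo (mo x (Some ([G2],[G2]))) = 0"
proof (cases x)
  case (Some p)
  obtain a b where p: "p = (a,b)" by fastforce
  show ?thesis
  proof (cases b)
    case Nil
    then show ?thesis using Some p by (auto simp: cu_mult_def cu_e_def tau_w_def)
  next
    case (Cons g b')
    then show ?thesis using Some p by (cases g) (auto simp: cu_mult_def cu_e_def tau_w_def)
  qed
qed simp

lemma f0_l1: "f0 \<in> l1"
  unfolding f0_def by (intro l1_diff l1_delta)

lemma phi_f0: "phi x f0 = 0"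
  unfolding f0_def using f0_comb[of x]
  by (simp add: phi_diff l1_diff l1_delta phi_delta)



definition Sset :: "(cu \<Rightarrow> complex) set" where
  "Sset = {x \<in> l1. \<forall>r. phi r x = 0}"

lemma phi_left:
  assumes a: "a \<in> l1" and x: "x \<in> Sset"
  shows "phi r (a # x) = 0"
proof -
  have xl: "x \<in> l1" and x0: "\<And>r. phi r x = 0" using x by (auto simp: Sset_def)
  have "phi r (a # x) = (\<Sum>\<^sub>\<infinity>w. (a # x) w * (\<lambda>q. tauo (mo r q)) (Some w))"
    by (simp add: phi_def)
  also have "\<dots> = (\<Sum>\<^sub>\<infinity>p. a (fst p) * x (snd p) * tauo (mo r (cu_mult (fst p) (snd p))))"
    by (rule conv_main[OF a xl, of _ 1]) (auto simp: tauo_bound)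
  also have "\<dots> = (\<Sum>\<^sub>\<infinity>p. a (fst p) * x (snd p) * tauo (mo (mo r (Some (fst p))) (Some (snd p))))"
    by (simp add: mo_assoc)
  also have "\<dots> = (\<Sum>\<^sub>\<infinity>u. a u * (\<Sum>\<^sub>\<infinity>v. x v * tauo (mo (mo r (Some u)) (Some v))))"
    by (rule fub1[OF a xl, of _ 1]) (auto simp: tauo_bound)
  also have "\<dots> = 0" using x0 by (simp add: phi_def[symmetric])
  finally show ?thesis .
qed

lemma phi_right:
  assumes a: "a \<in> l1" and x: "x \<in> Sset"
  shows "phi r (x # a) = 0"
proof -
  have xl: "x \<in> l1" and x0: "\<And>r. phi r x = 0" using x by (auto simp: Sset_def)
  have re: "tauo (mo r (mo (Some q) (Some p))) = tauo (mo (mo (Some p) r) (Some q))" for p q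
    by (metis mo_assoc tauo_comm)
  have "phi r (x # a) = (\<Sum>\<^sub>\<infinity>w. (x # a) w * (\<lambda>q. tauo (mo r q)) (Some w))"
    by (simp add: phi_def)
  also have "\<dots> = (\<Sum>\<^sub>\<infinity>p. x (fst p) * a (snd p) * tauo (mo r (cu_mult (fst p) (snd p))))"
    by (rule conv_main[OF xl a, of _ 1]) (auto simp: tauo_bound)
  also have "\<dots> = (\<Sum>\<^sub>\<infinity>p. x (fst p) * a (snd p) * tauo (mo (mo (Some (snd p)) r) (Some (fst p))))"
    using re by (metis mo.simps(1))
  also have "\<dots> = (\<Sum>\<^sub>\<infinity>v. a v * (\<Sum>\<^sub>\<infinity>u. x u * tauo (mo (mo (Some v) r) (Some u))))"
    by (rule fub2[OF xl a, of _ 1]) (auto simp: tauo_bound)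
  also have "\<dots> = 0" using x0 by (simp add: phi_def[symmetric])
  finally show ?thesis .
qed

lemma Sset_closed_ideal: "closed_ideal Sset"
  unfolding closed_ideal_def
proof (intro conjI ballI allI impI)
  show "Sset \<subseteq> l1" by (auto simp: Sset_def)
  show "0 \<in> Sset" by (simp add: Sset_def phi_def l1_def)
next
  fix x y assume "x \<in> Sset" "y \<in> Sset"
  thus "x + y \<in> Sset" by (auto simp: Sset_def phi_add l1_add)
next
  fix c :: complex and x assume "x \<in> Sset"
  thus "(\<lambda>w. c * x w) \<in> Sset" by (auto simp: Sset_def phi_scale l1_scale)
next
  fix a x assume "a \<in> l1" "x \<in> Sset"
  thus "a # x \<in> Sset" "x # a \<in> Sset"
    using phi_left phi_right conv_l1 by (auto simp: Sset_def)
next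
  fix F :: "nat \<Rightarrow> cu \<Rightarrow> complex" and f
  assume h: "(\<forall>n. F n \<in> Sset) \<and> f \<in> l1 \<and> (\<lambda>n. l1norm (F n - f)) \<longlonglongrightarrow> 0"
  have "phi r f = 0" for r
  proof -
    have "norm (phi r f) \<le> l1norm (F n - f)" for n
    proof -
      have Fn: "F n \<in> l1" "phi r (F n) = 0" using h by (auto simp: Sset_def)
      have "phi r (F n - f) = - phi r f" using phi_diff[OF Fn(1)] h Fn(2) by simp
      hence "norm (phi r f) = norm (phi r (F n - f))" by simp
      also have "\<dots> \<le> l1norm (F n - f)" using phi_bound l1_diff Fn(1) h by blast
      finally show ?thesis .
    qed
    hence "norm (phi r f) \<le> 0" using h by (intro LIMSEQ_le_const[of _ 0]) auto
    thus ?thesis by simp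
  qed
  thus "f \<in> Sset" using h by (simp add: Sset_def)
qed

lemma f0_S: "f0 \<in> Sset" by (simp add: Sset_def f0_l1 phi_f0)

lemma J_sub: "J \<subseteq> Sset"
  unfolding J_def using Sset_closed_ideal f0_S by blast

lemma zero_J: "0 \<in> J"
  unfolding J_def closed_ideal_def by blast

lemma tau_J: "j \<in> J \<Longrightarrow> tau j = 0"
  using J_sub by (auto simp: Sset_def tau_phi)

lemma tau_delta: "tau (delta s) = tau_w s"
  by (simp add: tau_phi phi_delta cu_e_left)

lemma tau_conv: "f \<in> l1 \<Longrightarrow> g \<in> l1 \<Longrightarrow>
  tau (f # g) = (\<Sum>\<^sub>\<infinity>p. f (fst p) * g (snd p) * tauo (mo (Some (fst p)) (Some (snd p))))"
proof -
  assume a: "f \<in> l1" "g \<in> l1"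
  have "tau (f # g) = (\<Sum>\<^sub>\<infinity>w. (f # g) w * tauo (Some w))" by (simp add: tau_def)
  also have "\<dots> = (\<Sum>\<^sub>\<infinity>p. f (fst p) * g (snd p) * tauo (cu_mult (fst p) (snd p)))"
    by (rule conv_main[OF a, of _ 1]) (auto simp: tauo_bound)
  finally show ?thesis by simp
qed

lemma tau_trace: "f \<in> l1 \<Longrightarrow> g \<in> l1 \<Longrightarrow> tau (f # g) = tau (g # f)"
proof -
  assume a: "f \<in> l1" "g \<in> l1"
  have bs: "bij_betw prod.swap (UNIV :: (cu \<times> cu) set) UNIV"
    by (rule bij_betw_byWitness[where f'=prod.swap]) auto
  have "tau (g # f) = (\<Sum>\<^sub>\<infinity>p. g (fst p) * f (snd p) * tauo (mo (Some (fst p)) (Some (snd p))))"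
    using tau_conv[OF a(2,1)] .
  also have "\<dots> = (\<Sum>\<^sub>\<infinity>p. g (fst (prod.swap p)) * f (snd (prod.swap p)) * tauo (mo (Some (fst (prod.swap p))) (Some (snd (prod.swap p)))))"
    by (rule infsum_reindex_bij_betw[OF bs, symmetric])
  also have "\<dots> = (\<Sum>\<^sub>\<infinity>p. f (fst p) * g (snd p) * tauo (mo (Some (fst p)) (Some (snd p))))"
  proof (rule infsum_cong)
    fix p :: "cu \<times> cu"
    show "g (fst (prod.swap p)) * f (snd (prod.swap p)) * tauo (mo (Some (fst (prod.swap p))) (Some (snd (prod.swap p)))) =
      f (fst p) * g (snd p) * tauo (mo (Some (fst p)) (Some (snd p)))"
      using tauo_comm[of "Some (snd p)" "Some (fst p)"] by (simp only: fst_swap snd_swap mult.commute)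
  qed
  also have "\<dots> = tau (f # g)" using tau_conv[OF a] by simp
  finally show ?thesis by simp
qed

lemma tau_G1: "tau (delta ([G1],[])) = 1"
proof -
  have "([G1],[]::gen list) = ([] @ [G1], [])" by simp
  thus ?thesis by (auto simp: tau_delta tau_w_def)
qed

theorem theorem4p3:
  shows "(\<exists>f\<in>l1. tau f \<noteq> 0)
    \<and> (\<exists>C. \<forall>f\<in>l1. norm (tau f) \<le> C * l1norm f)
    \<and> (\<forall>f\<in>l1. \<forall>g\<in>l1. tau (f # g) = tau (g # f))
    \<and> tau (delta cu_e) = 0
    \<and> (\<forall>j\<in>J. tau j = 0)
    \<and> (\<forall>f\<in>l1. \<forall>g\<in>l1. f - g \<in> J \<longrightarrow> tau f = tau g)
    \<and> (\<exists>C. \<forall>f\<in>l1. norm (tau f) \<le> C * (INF j\<in>J. l1norm (f - j)))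
    \<and> (\<exists>f\<in>l1. f \<notin> J \<and> tau f \<noteq> 0)"
proof (intro conjI)
  show "\<exists>f\<in>l1. tau f \<noteq> 0" by (intro bexI[of _ "delta ([G1],[])"]) (simp_all add: tau_G1 l1_delta)
  show "\<exists>C. \<forall>f\<in>l1. norm (tau f) \<le> C * l1norm f"
    by (rule exI[of _ 1]) (simp add: tau_phi phi_bound)
  show "\<forall>f\<in>l1. \<forall>g\<in>l1. tau (f # g) = tau (g # f)" using tau_trace by blast
  show "tau (delta cu_e) = 0" by (simp add: tau_delta tau_w_def cu_e_def)
  show "\<forall>j\<in>J. tau j = 0" using tau_J by blast
  have lin: "tau (f - g) = tau f - tau g" if "f \<in> l1" "g \<in> l1" for f g
    using that by (simp add: tau_phi phi_diff)
  show "\<forall>f\<in>l1. \<forall>g\<in>l1. f - g \<in> J \<longrightarrow> tau f = tau g"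
    using lin tau_J by fastforce
  show "\<exists>C. \<forall>f\<in>l1. norm (tau f) \<le> C * (INF j\<in>J. l1norm (f - j))"
  proof (rule exI[of _ 1], intro ballI)
    fix f assume f: "f \<in> l1"
    have "norm (tau f) \<le> (INF j\<in>J. l1norm (f - j))"
    proof (rule cINF_greatest)
      show "J \<noteq> {}" using zero_J by blast
      fix j assume j: "j \<in> J"
      hence jl: "j \<in> l1" using J_sub by (auto simp: Sset_def)
      have "tau f = tau (f - j)" using lin[OF f jl] tau_J[OF j] by simp
      thus "norm (tau f) \<le> l1norm (f - j)" using phi_bound l1_diff[OF f jl] by (simp add: tau_phi)
    qed
    thus "norm (tau f) \<le> 1 * (INF j\<in>J. l1norm (f - j))" by simp
  qed
  show "\<exists>f\<in>l1. f \<notin> J \<and> tau f \<noteq> 0"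
    by (intro bexI[of _ "delta ([G1],[])"]) (use tau_G1 l1_delta tau_J in auto)
qed

end
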